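(* Let $T>0$, $\theta_{S_0}>0$, a positive integer $k_{S_0}$, a constant $I_e\ge 0$, constants $\rho_B,\beta_0>0$, $\alpha_1>0$, $\lambda_B>0$, a real number $|\bar\phi_B|>1$, and $0<d_{00}<R:=\sqrt{|\mathcal{A}|/\pi}$ be given. Let $S_0\sim\Gamma(k_{S_0},\theta_{S_0})$; let $I_{B0}\sim\Gamma(|\bar\phi_B|-1,\rho_B\beta_0 d_{00}^{-\alpha_1})$; let $\Phi$ be a homogeneous Poisson point process of density $\lambda_B$ on the annulus $\{x\in\mathbb{R}^2: d_{00}\le\|x\|\le R\}$ with i.i.d. marks $\kappa_x\sim\Gamma(|\bar\phi_B|,1)$, and $I_B=\rho_B\sum_{x\in\Phi}\beta_0\|x\|^{-\alpha_1}\kappa_x$. Assume $S_0$, $I_{B0}$ and $I_B$ are mutually independent. Then $$\mathbb{P}\big[S_0>T(I_{B0}+I_B+I_e)\big]=\sum_{i=0}^{k_{S_0}-1}\frac{(-1)^i}{i!}\frac{\partial^i}{\partial s^i}\Big\{e^{-s\frac{TI_e}{\theta_{S_0}}}\mathcal{L}_{Y_{I_{B0}}}(s)\,\mathcal{L}_{Y_{I_B}}(s)\Big\}\Big|_{s=1},$$ where $\mathcal{L}_{Y_{I_{B0}}}$ and $\mathcal{L}_{Y_{I_B}}$ are the Laplace transforms of $Y_{I_{B0}}=TI_{B0}/\theta_{S_0}$ and $Y_{I_B}=TI_B/\theta_{S_0}$, given by $$\mathcal{L}_{Y_{I_{B0}}}(s)=\Big(1+s\frac{T\rho_B\beta_0d_{00}^{-\alpha_1}}{\theta_{S_0}}\Big)^{1-|\bar\phi_B|},$$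 $$\mathcal{L}_{Y_{I_B}}(s)=\exp\Big(2\pi\lambda_B\int_{d_{00}}^{R}\Big[\Big(1+s\frac{T\rho_B\beta_0r^{-\alpha_1}}{\theta_{S_0}}\Big)^{-|\bar\phi_B|}-1\Big]r\,\mathrm{d}r\Big).$$
   Context: $\Gamma(k,\theta)$ denotes the Gamma distribution with shape $k$ and scale $\theta$. In the application (hybrid cellular and cell-free network, conditioned on the distance $d_{00}$ from the typical UE to its nearest base station), $S_0$ is the (moment-matched) desired signal power, $I_{B0}$ the intra-cell interference, $I_B$ the inter-cell interference from base stations farther than $d_{00}$ in the network disk of area $|\mathcal{A}|$, $I_e=\bar I_A+\sigma^2$ is the average AP interference plus noise, $|\bar\phi_B|=\lambda_U/\lambda_B$ is the mean number of UEs per base station, and the left-hand side is the coverage probability $p_c(d_{00})$ at SINR threshold $T$. *)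

theory Defs
  imports "HOL-Probability.Probability"
begin

definition gamma_density :: "real \<Rightarrow> real \<Rightarrow> real \<Rightarrow> real" where
  "gamma_density k theta x =
     (if 0 < x then x powr (k - 1) * exp (- x / theta) / (Gamma k * theta powr k) else 0)"

definition gamma_measure :: "real \<Rightarrow> real \<Rightarrow> real measure" where
  "gamma_measure k theta = density lborel (\<lambda>x. ennreal (gamma_density k theta x))"

definition annulus :: "real \<Rightarrow> real \<Rightarrow> (real^2) set" where
  "annulus r1 r2 = {x. r1 \<le> norm x \<and> norm x \<le> r2}"

text \<open>A homogeneous PPP on a bounded set A is realised in the standard way: a Poisson(lam |A|)
  number of points, iid uniform on A (with iid marks).\<close>
definition ppp_interference ::
  "real \<Rightarrow> real \<Rightarrow> real \<Rightarrow> real \<Rightarrow> real \<Rightarrow> real \<Rightarrow> real \<Rightarrow> real measure" where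
  "ppp_interference lam r1 r2 rho beta0 alpha phi =
     measure_pmf (poisson_pmf (lam * measure lborel (annulus r1 r2))) \<bind>
       (\<lambda>n. distr (PiM {..<n} (\<lambda>_. uniform_measure lborel (annulus r1 r2) \<Otimes>\<^sub>M gamma_measure phi 1))
                 borel
                 (\<lambda>\<omega>. rho * (\<Sum>i<n. beta0 * norm (fst (\<omega> i)) powr (- alpha) * snd (\<omega> i))))"

end

theory Submission
  imports Defs
begin


lemma deriv_funpow_local:
  fixes f g :: "real \<Rightarrow> real"
  assumes "open S" "\<And>y. y \<in> S \<Longrightarrow> f y = g y"
  shows "y \<in> S \<Longrightarrow> (deriv ^^ i) f y = (deriv ^^ i) g y"
proof (induction i arbitrary: y)
  case 0 then show ?case using assms by simp
next
  case (Suc i)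
  have eq: "\<And>z. z \<in> S \<Longrightarrow> (deriv ^^ i) f z = (deriv ^^ i) g z" using Suc.IH by blast
  have "\<And>D. ((deriv ^^ i) f has_field_derivative D) (at y) \<longleftrightarrow> ((deriv ^^ i) g has_field_derivative D) (at y)"
  proof
    fix D assume "((deriv ^^ i) f has_field_derivative D) (at y)"
    then show "((deriv ^^ i) g has_field_derivative D) (at y)"
      by (rule has_field_derivative_transform_within_open[OF _ assms(1) Suc.prems]) (simp add: eq)
  next
    fix D assume "((deriv ^^ i) g has_field_derivative D) (at y)"
    then show "((deriv ^^ i) f has_field_derivative D) (at y)"
      by (rule has_field_derivative_transform_within_open[OF _ assms(1) Suc.prems]) (simp add: eq)
  qed
  then have "deriv ((deriv ^^ i) f) y = deriv ((deriv ^^ i) g) y"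
    unfolding deriv_def by simp
  then show ?case by simp
qed

lemma pow_exp_bound:
  fixes y a :: real assumes "0 \<le> y" "0 < a"
  shows "y ^ m * exp (- (a * y)) \<le> fact m / a ^ m"
proof -
  have s: "(\<lambda>n. (a*y) ^ n / fact n) sums exp (a*y)" using exp_converges[of "a*y"] by (simp add: divide_inverse_commute scaleR_conv_of_real)
  have "(a*y)^m / fact m \<le> exp (a*y)"
  proof -
    have "(\<Sum>n\<in>{m}. (a*y) ^ n / fact n) \<le> suminf (\<lambda>n. (a*y) ^ n / fact n)"
      by (rule sum_le_suminf) (use s assms in \<open>auto simp: sums_iff\<close>)
    then show ?thesis using s by (simp add: sums_iff)
  qed
  then have "a^m * y^m \<le> fact m * exp (a*y)"
    by (simp add: field_simps power_mult_distrib)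
  then have "y^m \<le> fact m * exp (a*y) / a^m" using assms by (simp add: field_simps)
  then have "y^m * exp (-(a*y)) \<le> fact m * exp (a*y) / a^m * exp (-(a*y))"
    by (rule mult_right_mono) simp
  also have "\<dots> = fact m / a^m" by (simp add: exp_minus field_simps)
  finally show ?thesis .
qed

lemma integrable_pow_exp:
  fixes Y :: "'a \<Rightarrow> real" and t :: real
  assumes M: "prob_space M" and Y[measurable]: "Y \<in> borel_measurable M"
    and nn: "AE \<omega> in M. 0 \<le> Y \<omega>" and t: "0 < t"
  shows "integrable M (\<lambda>\<omega>. Y \<omega> ^ m * exp (- t * Y \<omega>))"
proof -
  interpret prob_space M by (rule M)
  show ?thesis
  proof (rule integrable_const_bound[where B="fact m / t ^ m"])
    show "AE x in M. norm (Y x ^ m * exp (- t * Y x)) \<le> fact m / t ^ m"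
      using nn
    proof eventually_elim
      case (elim x)
      then show ?case using pow_exp_bound[OF elim t, of m] by simp
    qed
  qed simp
qed

lemma deriv_laplace_moment:
  fixes Y :: "'a \<Rightarrow> real" and s :: real
  assumes M: "prob_space M" and Y[measurable]: "Y \<in> borel_measurable M"
    and nn: "AE \<omega> in M. 0 \<le> Y \<omega>" and s: "0 < s"
  shows "((\<lambda>t. \<integral>\<omega>. Y \<omega> ^ n * exp (- t * Y \<omega>) \<partial>M) has_real_derivative
           - (\<integral>\<omega>. Y \<omega> ^ Suc n * exp (- s * Y \<omega>) \<partial>M)) (at s)"
proof -
  interpret prob_space M by (rule M)
  define g where "g t y = y ^ n * exp (- t * y)" for t y :: real
  define C where "C = fact (Suc n) / (s/2) ^ Suc n"
  define L where "L t = (\<integral>\<omega>. g t (Y \<omega>) \<partial>M)" for t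
  have int: "\<And>t. 0 < t \<Longrightarrow> integrable M (\<lambda>\<omega>. g t (Y \<omega>))"
    unfolding g_def using integrable_pow_exp[OF M Y nn] by blast
  have dy: "((\<lambda>t. g t y) has_real_derivative -(y ^ Suc n * exp (- t * y))) (at t)" for y t
    unfolding g_def by (auto intro!: derivative_eq_intros simp: algebra_simps)
  have bnd: "\<bar>g u y - g t y\<bar> \<le> C * \<bar>u - t\<bar>" if y: "0 \<le> y" and tu: "s/2 \<le> t" "s/2 \<le> u" for y t u
  proof -
    have "norm ((\<lambda>t. g t y) u - (\<lambda>t. g t y) t) \<le> C * norm (u - t)"
    proof (rule field_differentiable_bound[where S="{s/2..}"])
      show "convex {s/2..}" by simp
      show "((\<lambda>t. g t y) has_field_derivative -(y ^ Suc n * exp (- z * y))) (at z within {s/2..})" for z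
        using dy by (rule has_field_derivative_at_within)
      show "norm (-(y ^ Suc n * exp (- z * y))) \<le> C" if z: "z \<in> {s/2..}" for z
      proof -
        have "norm (-(y ^ Suc n * exp (- z * y))) = y ^ Suc n * exp (- z * y)" using y by simp
        also have "\<dots> \<le> y ^ Suc n * exp (- ((s/2) * y))"
        proof -
          have "(s/2) * y \<le> z * y" using z y by (intro mult_right_mono) auto
          then show ?thesis using y by (intro mult_left_mono) auto
        qed
        also have "\<dots> \<le> C" unfolding C_def by (rule pow_exp_bound) (use y s in auto)
        finally show ?thesis .
      qed
    qed (use tu in auto)
    then show ?thesis by simp
  qed
  have "((\<lambda>h. (L (s + h) - L s) / h) \<longlongrightarrow> - (\<integral>\<omega>. Y \<omega> ^ Suc n * exp (- s * Y \<omega>) \<partial>M)) (at 0)"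
    unfolding tendsto_at_iff_sequentially
  proof (intro allI impI)
    fix X :: "nat \<Rightarrow> real" assume X: "\<forall>i. X i \<in> UNIV - {0}" "X \<longlonglongrightarrow> 0"
    have "eventually (\<lambda>i. dist (X i) 0 < s/2) sequentially"
      using X(2)[unfolded tendsto_iff, rule_format, of "s/2"] s by simp
    then obtain N where N: "\<And>i. N \<le> i \<Longrightarrow> \<bar>X i\<bar> < s/2"
      by (auto simp: eventually_sequentially)
    define h where "h i = X (i + N)" for i
    have h0: "h i \<noteq> 0" for i using X(1) by (auto simp: h_def)
    have hs: "\<bar>h i\<bar> < s/2" for i using N[of "i+N"] by (simp add: h_def)
    have hlim: "h \<longlonglongrightarrow> 0" unfolding h_def by (rule LIMSEQ_ignore_initial_segment[OF X(2)])
    have eq: "(L (s + h i) - L s) / h i = (\<integral>\<omega>. (g (s + h i) (Y \<omega>) - g s (Y \<omega>)) / h i \<partial>M)" for i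
    proof -
      have "0 < s + h i" using hs[of i] by auto
      then show ?thesis
        unfolding L_def by (simp add: integral_diff int s)
    qed
    have "(\<lambda>i. \<integral>\<omega>. (g (s + h i) (Y \<omega>) - g s (Y \<omega>)) / h i \<partial>M) \<longlonglongrightarrow>
          (\<integral>\<omega>. - (Y \<omega> ^ Suc n * exp (- s * Y \<omega>)) \<partial>M)"
    proof (rule integral_dominated_convergence[where w="\<lambda>_. C"])
      show "(\<lambda>\<omega>. - (Y \<omega> ^ Suc n * exp (- s * Y \<omega>))) \<in> borel_measurable M" by simp
      show "(\<lambda>\<omega>. (g (s + h i) (Y \<omega>) - g s (Y \<omega>)) / h i) \<in> borel_measurable M" for i
        unfolding g_def by simp
      show "integrable M (\<lambda>_. C)" by simp
      show "AE \<omega> in M. (\<lambda>i. (g (s + h i) (Y \<omega>) - g s (Y \<omega>)) / h i) \<longlonglongrightarrow> - (Y \<omega> ^ Suc n * exp (- s * Y \<omega>))"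
      proof (rule AE_I2)
        fix \<omega>
        have "((\<lambda>k. (g (s + k) (Y \<omega>) - g s (Y \<omega>)) / k) \<longlongrightarrow> - (Y \<omega> ^ Suc n * exp (- s * Y \<omega>))) (at 0)"
          using dy[of "Y \<omega>" s] unfolding DERIV_def .
        then show "(\<lambda>i. (g (s + h i) (Y \<omega>) - g s (Y \<omega>)) / h i) \<longlonglongrightarrow> - (Y \<omega> ^ Suc n * exp (- s * Y \<omega>))"
          unfolding tendsto_at_iff_sequentially using h0 hlim by (auto simp: o_def)
      qed
      show "AE \<omega> in M. norm ((g (s + h i) (Y \<omega>) - g s (Y \<omega>)) / h i) \<le> C" for i
        using nn
      proof eventually_elim
        case (elim \<omega>)
        have "\<bar>g (s + h i) (Y \<omega>) - g s (Y \<omega>)\<bar> \<le> C * \<bar>s + h i - s\<bar>"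
          by (rule bnd) (use elim hs[of i] in auto)
        then show ?case using h0[of i] by (simp add: divide_le_eq abs_divide)
      qed
    qed
    then have "(\<lambda>i. (L (s + h i) - L s) / h i) \<longlonglongrightarrow> - (\<integral>\<omega>. Y \<omega> ^ Suc n * exp (- s * Y \<omega>) \<partial>M)"
      unfolding eq by simp
    moreover have "(\<lambda>i. ((\<lambda>h. (L (s + h) - L s) / h) \<circ> X) (i + N)) = (\<lambda>i. (L (s + h i) - L s) / h i)"
      by (simp add: h_def o_def)
    ultimately have "(\<lambda>i. ((\<lambda>h. (L (s + h) - L s) / h) \<circ> X) (i + N)) \<longlonglongrightarrow> - (\<integral>\<omega>. Y \<omega> ^ Suc n * exp (- s * Y \<omega>) \<partial>M)"
      by (simp only:)
    then show "((\<lambda>h. (L (s + h) - L s) / h) \<circ> X) \<longlonglongrightarrow> - (\<integral>\<omega>. Y \<omega> ^ Suc n * exp (- s * Y \<omega>) \<partial>M)"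
      by (rule LIMSEQ_offset)
  qed
  then show ?thesis unfolding DERIV_def L_def g_def .
qed

lemma deriv_iter_laplace:
  fixes Y :: "'a \<Rightarrow> real" and s :: real
  assumes M: "prob_space M" and Y[measurable]: "Y \<in> borel_measurable M"
    and nn: "AE \<omega> in M. 0 \<le> Y \<omega>"
  shows "0 < s \<Longrightarrow> (deriv ^^ i) (\<lambda>t. \<integral>\<omega>. exp (- t * Y \<omega>) \<partial>M) s
            = (-1) ^ i * (\<integral>\<omega>. Y \<omega> ^ i * exp (- s * Y \<omega>) \<partial>M)"
proof (induction i arbitrary: s)
  case 0 then show ?case by simp
next
  case (Suc i)
  have "deriv ((deriv ^^ i) (\<lambda>t. \<integral>\<omega>. exp (- t * Y \<omega>) \<partial>M)) s
      = deriv (\<lambda>t. (-1) ^ i * (\<integral>\<omega>. Y \<omega> ^ i * exp (- t * Y \<omega>) \<partial>M)) s"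
  proof -
    have "(deriv ^^ 1) ((deriv ^^ i) (\<lambda>t. \<integral>\<omega>. exp (- t * Y \<omega>) \<partial>M)) s
      = (deriv ^^ 1) (\<lambda>t. (-1) ^ i * (\<integral>\<omega>. Y \<omega> ^ i * exp (- t * Y \<omega>) \<partial>M)) s"
      by (rule deriv_funpow_local[where S="{0<..}"]) (use Suc in auto)
    then show ?thesis by simp
  qed
  also have "\<dots> = (-1) ^ i * (- (\<integral>\<omega>. Y \<omega> ^ Suc i * exp (- s * Y \<omega>) \<partial>M))"
    by (rule DERIV_imp_deriv) (intro DERIV_cmult deriv_laplace_moment[OF M Y nn Suc.prems])
  finally show ?case by simp
qed



lemma gamma_density_nonneg: "0 < k \<Longrightarrow> 0 < theta \<Longrightarrow> 0 \<le> gamma_density k theta x"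
  by (simp add: gamma_density_def)

lemma gamma_density_measurable[measurable]: "gamma_density k theta \<in> borel_measurable borel"
  unfolding gamma_density_def by measurable

lemma gamma_integral_nn:
  fixes a beta :: real assumes a: "0 < a" and b: "0 < beta"
  shows "(\<integral>\<^sup>+x. ennreal (if 0 < x then x powr (a - 1) * exp (- beta * x) else 0) \<partial>lborel)
          = ennreal (Gamma a / beta powr a)"
proof -
  define f where "f t = (if 0 < t then t powr (a - 1) * exp (- t) else 0)" for t :: real
  have f_eq: "f = (\<lambda>t. if t \<in> {0..} then t powr (a - 1) / exp t else 0)"
    by (auto simp: f_def fun_eq_iff exp_minus field_simps)
  have "(f has_integral Gamma a) UNIV"
    unfolding f_eq has_integral_restrict_UNIV by (rule Gamma_integral_real[OF a])
  moreover have "f \<in> borel_measurable borel" unfolding f_def by measurable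
  moreover have "\<And>x. 0 \<le> f x" by (simp add: f_def)
  ultimately have I: "integral\<^sup>N lborel f = Gamma a"
    using nn_integral_has_integral_lborel by blast
  have "integral\<^sup>N lborel f = ennreal \<bar>beta\<bar> * (\<integral>\<^sup>+x. f (0 + beta * x) \<partial>lborel)"
    by (rule nn_integral_real_affine) (use b in \<open>auto simp: f_def\<close>)
  also have "(\<lambda>x. ennreal (f (0 + beta * x))) = (\<lambda>x. ennreal (beta powr (a - 1)) *
      ennreal (if 0 < x then x powr (a - 1) * exp (- beta * x) else 0))"
    using b by (auto simp: f_def fun_eq_iff powr_mult zero_less_mult_iff ennreal_mult[symmetric])
  also have "(\<integral>\<^sup>+x. ennreal (beta powr (a - 1)) *
      ennreal (if 0 < x then x powr (a - 1) * exp (- beta * x) else 0) \<partial>lborel) =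
      ennreal (beta powr (a - 1)) * (\<integral>\<^sup>+x. ennreal (if 0 < x then x powr (a - 1) * exp (- beta * x) else 0) \<partial>lborel)"
    by (rule nn_integral_cmult) simp
  finally have "ennreal (Gamma a) = ennreal (beta * beta powr (a - 1)) * (\<integral>\<^sup>+x. ennreal (if 0 < x then x powr (a - 1) * exp (- beta * x) else 0) \<partial>lborel)"
    using I b by (simp add: ennreal_mult mult.assoc)
  moreover have "beta * beta powr (a - 1) = beta powr a"
    using b by (simp add: powr_diff)
  ultimately have "ennreal (Gamma a) = ennreal (beta powr a) * (\<integral>\<^sup>+x. ennreal (if 0 < x then x powr (a - 1) * exp (- beta * x) else 0) \<partial>lborel)"
    by simp
  then have "ennreal (1 / beta powr a) * ennreal (Gamma a) = (\<integral>\<^sup>+x. ennreal (if 0 < x then x powr (a - 1) * exp (- beta * x) else 0) \<partial>lborel)"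
    using b by (simp add: ennreal_mult[symmetric] mult.assoc[symmetric] flip: ennreal_mult')
  then show ?thesis using b a
    by (simp add: ennreal_mult[symmetric])
qed

lemma gamma_laplace_nn:
  fixes a b u :: real assumes a: "0 < a" and b: "0 < b" and u: "0 < 1/b + u"
  shows "(\<integral>\<^sup>+x. ennreal (exp (- u * x)) \<partial>gamma_measure a b) = ennreal ((1 + u * b) powr (- a))"
proof -
  have "(\<integral>\<^sup>+x. ennreal (exp (- u * x)) \<partial>gamma_measure a b) =
        (\<integral>\<^sup>+x. ennreal (gamma_density a b x) * ennreal (exp (- u * x)) \<partial>lborel)"
    unfolding gamma_measure_def by (rule nn_integral_density) (auto simp: gamma_density_nonneg a b)
  also have "\<dots> = (\<integral>\<^sup>+x. ennreal (1 / (Gamma a * b powr a)) *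
        ennreal (if 0 < x then x powr (a - 1) * exp (- (1/b + u) * x) else 0) \<partial>lborel)"
    using a b
    by (intro nn_integral_cong)
       (auto simp: gamma_density_def ennreal_mult[symmetric] exp_add[symmetric] field_simps)
  also have "\<dots> = ennreal (1 / (Gamma a * b powr a)) *
        (\<integral>\<^sup>+x. ennreal (if 0 < x then x powr (a - 1) * exp (- (1/b + u) * x) else 0) \<partial>lborel)"
    by (rule nn_integral_cmult) simp
  also have "\<dots> = ennreal (1 / (Gamma a * b powr a)) * ennreal (Gamma a / (1/b + u) powr a)"
    using a b u by (simp add: gamma_integral_nn)
  also have "\<dots> = ennreal (1 / (Gamma a * b powr a) * (Gamma a / (1/b + u) powr a))"
    by (rule ennreal_mult[symmetric]) (use a b in auto)
  also have "1 / (Gamma a * b powr a) * (Gamma a / (1/b + u) powr a) = (1 + u * b) powr (- a)"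
  proof -
    have "b powr a * (1/b + u) powr a = (b * (1/b + u)) powr a"
      using b u by (simp add: powr_mult)
    also have "b * (1/b + u) = 1 + u * b" using b by (simp add: field_simps)
    finally have e: "b powr a * (1/b + u) powr a = (1 + u * b) powr a" .
    have "1 + u * b > 0" using b u
      by (metis \<open>b * (1 / b + u) = 1 + u * b\<close> mult_pos_pos)
    moreover have "Gamma a \<noteq> 0" using Gamma_real_pos[OF a] by linarith
    ultimately show ?thesis using a b e
      by (simp add: powr_minus field_simps)
  qed
  finally show ?thesis .
qed

lemma prob_space_gamma_measure:
  fixes a b :: real assumes a: "0 < a" and b: "0 < b"
  shows "prob_space (gamma_measure a b)"
proof
  have "emeasure (gamma_measure a b) (space (gamma_measure a b)) = (\<integral>\<^sup>+x. ennreal (exp (- 0 * x)) \<partial>gamma_measure a b)"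
    by (simp add: gamma_measure_def emeasure_density)
  also have "\<dots> = 1" using gamma_laplace_nn[OF a b, of 0] b by simp
  finally show "emeasure (gamma_measure a b) (space (gamma_measure a b)) = 1" .
qed

lemma sets_gamma_measure[simp, measurable_cong]: "sets (gamma_measure a b) = sets borel"
  by (simp add: gamma_measure_def)

lemma space_gamma_measure[simp]: "space (gamma_measure a b) = UNIV"
  by (simp add: gamma_measure_def)

lemma AE_gamma_pos:
  "AE x in gamma_measure a b. 0 < x"
  unfolding gamma_measure_def
  by (subst AE_density) (auto simp: gamma_density_def)

lemma gamma_measure_erlang:
  fixes theta :: real assumes k: "0 < k" and t: "0 < theta"
  shows "gamma_measure (real k) theta = density lborel (erlang_density (k - 1) (1/theta))"
  unfolding gamma_measure_def
proof (rule density_cong)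
  show "AE x in lborel. ennreal (gamma_density (real k) theta x) = ennreal (erlang_density (k - 1) (1 / theta) x)"
    using AE_lborel_singleton[of 0]
  proof eventually_elim
    case (elim x)
    obtain m where m: "k = Suc m" using k by (cases k) auto
    have G: "Gamma (1 + real m) = fact m" using Gamma_fact[of m] by simp
    have P: "theta powr (1 + real m) = theta * theta ^ m" using powr_realpow[of theta "Suc m"] t by simp
    have "0 < x \<Longrightarrow> gamma_density (real k) theta x = erlang_density (k - 1) (1 / theta) x"
      using t
      by (simp add: G P gamma_density_def erlang_density_def powr_realpow m)
         (simp add: field_simps power_divide powr_realpow)
    then show ?case using elim by (auto simp: gamma_density_def erlang_density_def)
  qed
qed auto

lemma gamma_tail:
  fixes theta a :: real assumes k: "0 < k" and t: "0 < theta" and a: "0 \<le> a"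
  shows "emeasure (gamma_measure (real k) theta) {a<..} =
           ennreal (\<Sum>n<k. (a / theta) ^ n * exp (- a / theta) / fact n)"
proof -
  interpret E: prob_space "density lborel (erlang_density (k - 1) (1/theta))"
    by (rule prob_space_erlang_density) (use t in simp)
  have sp: "{a<..} = space (density lborel (erlang_density (k - 1) (1/theta))) - {..a}" by auto
  have "emeasure (gamma_measure (real k) theta) {a<..} =
        emeasure (density lborel (erlang_density (k - 1) (1/theta))) (space (density lborel (erlang_density (k - 1) (1/theta))) - {..a})"
    by (simp only: gamma_measure_erlang[OF k t] sp)
  also have "\<dots> = ennreal (E.prob (space (density lborel (erlang_density (k - 1) (1/theta))) - {..a}))"
    by (rule E.emeasure_eq_measure)
  also have "E.prob (space (density lborel (erlang_density (k - 1) (1/theta))) - {..a}) = 1 - E.prob {..a}"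
    by (rule E.prob_compl) simp
  also have "E.prob {..a} = erlang_CDF (k - 1) (1/theta) a"
    unfolding measure_def using emeasure_erlang_density[of "1/theta" "k - 1" a] t
    by (simp add: erlang_CDF_nonneg)
  also have "1 - erlang_CDF (k - 1) (1/theta) a = (\<Sum>n<k. (a / theta) ^ n * exp (- a / theta) / fact n)"
  proof -
    have "{..k-1} = {..<k}" using k by auto
    then show ?thesis using a by (simp add: erlang_CDF_def)
  qed
  finally show ?thesis .
qed



lemma annulus_sets_borel[measurable]: "annulus r1 r2 \<in> sets (borel :: (real^2) measure)"
  unfolding annulus_def by measurable

lemma annulus_sets[measurable]: "annulus r1 r2 \<in> sets (lborel :: (real^2) measure)"
  by simp

lemma nn_integral_cont_interval:
  fixes G :: "real \<Rightarrow> real"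
  assumes ab: "a \<le> b" and c: "continuous_on {a..b} G" and nn: "\<And>x. x \<in> {a..b} \<Longrightarrow> 0 \<le> G x"
  shows "(\<integral>\<^sup>+r. ennreal (indicator {a..b} r * G r) \<partial>lborel) = ennreal (integral {a..b} G)"
proof (rule nn_integral_has_integral_lborel)
  show "(\<lambda>r. indicator {a..b} r * G r) \<in> borel_measurable borel"
    using borel_measurable_continuous_on_indicator[of "{a..b}" G] c by simp
  show "0 \<le> indicator {a..b} x * G x" for x using nn by (simp split: split_indicator)
  have "(G has_integral integral {a..b} G) {a..b}"
    using integrable_continuous_interval[OF c] by (rule integrable_integral)
  then show "((\<lambda>r. indicator {a..b} r * G r) has_integral integral {a..b} G) UNIV"
  proof -
    have eq: "(\<lambda>r. indicator {a..b} r * G r) = (\<lambda>x. if x \<in> {a..b} then G x else 0)"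
      by (auto simp: indicator_def fun_eq_iff)
    show ?thesis unfolding eq has_integral_restrict_UNIV by fact
  qed
qed

lemma integral_2pi_r:
  fixes lo R :: real assumes "lo \<le> R"
  shows "integral {lo..R} (\<lambda>r. 2 * pi * r) = pi * (R^2 - lo^2)"
proof -
  have "((\<lambda>r. 2 * pi * r) has_integral ((\<lambda>r. pi * r^2) R - (\<lambda>r. pi * r^2) lo)) {lo..R}"
    by (rule fundamental_theorem_of_calculus[OF assms])
       (auto intro!: derivative_eq_intros simp: has_real_derivative_iff_has_vector_derivative[symmetric])
  then have "integral {lo..R} (\<lambda>r. 2 * pi * r) = pi * R^2 - pi * lo^2" by (rule integral_unique)
  then show ?thesis by (simp add: right_diff_distrib)
qed

lemma emeasure_ball2: "0 \<le> r \<Longrightarrow> emeasure lborel (ball (0::real^2) r) = ennreal (pi * r^2)"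
  using emeasure_ball[of r "0::real^2"] by (simp add: unit_ball_vol_2 mult.commute)

lemma emeasure_cball2: "0 \<le> r \<Longrightarrow> emeasure lborel (cball (0::real^2) r) = ennreal (pi * r^2)"
  using emeasure_cball[of r "0::real^2"] by (simp add: unit_ball_vol_2 mult.commute)

lemma emeasure_diff_balls:
  fixes S T :: "(real^2) set" and r1 r2 :: real
  assumes "0 \<le> r1" "r1 \<le> r2" "T \<subseteq> S" "T \<in> sets lborel" "S \<in> sets lborel"
    and "emeasure lborel S = ennreal (pi * r2^2)" "emeasure lborel T = ennreal (pi * r1^2)"
  shows "emeasure lborel (S - T) = ennreal (pi * (r2^2 - r1^2))"
proof -
  have "emeasure lborel (S - T) = emeasure lborel S - emeasure lborel T"
    by (rule emeasure_Diff) (use assms in auto)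
  also have "\<dots> = ennreal (pi * r2^2 - pi * r1^2)"
    using assms by (simp add: ennreal_minus)
  finally show ?thesis by (simp add: algebra_simps)
qed

lemma emeasure_annulus_gt:
  fixes d R x :: real assumes d: "0 < d" "d < R"
  shows "emeasure lborel (annulus d R \<inter> {v. x < norm v}) = ennreal (pi * (R^2 - (min R (max d x))^2))"
proof (cases "x < d")
  case True
  then have "annulus d R \<inter> {v. x < norm v} = cball 0 R - ball 0 d"
    by (auto simp: annulus_def)
  moreover have "emeasure lborel (cball (0::real^2) R - ball 0 d) = ennreal (pi * (R^2 - d^2))"
    by (rule emeasure_diff_balls) (use d in \<open>auto simp: emeasure_ball2 emeasure_cball2\<close>)
  ultimately show ?thesis using True d by (simp add: max_def min_def)
next
  case False
  show ?thesis
  proof (cases "x < R")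
    case True
    then have "annulus d R \<inter> {v. x < norm v} = cball 0 R - cball 0 x"
      using False by (auto simp: annulus_def)
    moreover have "emeasure lborel (cball (0::real^2) R - cball 0 x) = ennreal (pi * (R^2 - x^2))"
      by (rule emeasure_diff_balls) (use d False True in \<open>auto simp: emeasure_ball2 emeasure_cball2\<close>)
    ultimately show ?thesis using True False d by (simp add: max_def min_def)
  next
    case False2: False
    then have "annulus d R \<inter> {v. x < norm v} = {}"
      by (auto simp: annulus_def)
    then show ?thesis using False2 False d by (simp add: max_def min_def)
  qed
qed

lemma measure_annulus:
  fixes d R :: real assumes d: "0 < d" "d < R"
  shows "measure lborel (annulus d R) = pi * (R^2 - d^2)"
proof -
  have "annulus d R \<inter> {v. (d/2) < norm v} = annulus d R" using d by (auto simp: annulus_def)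
  then show ?thesis
    using emeasure_annulus_gt[OF d, of "d/2"] d
    by (simp add: measure_def max_def min_def)
qed

lemma emeasure_annulus:
  fixes d R :: real assumes d: "0 < d" "d < R"
  shows "emeasure lborel (annulus d R) = ennreal (pi * (R^2 - d^2))"
proof -
  have "annulus d R \<inter> {v. (d/2) < norm v} = annulus d R" using d by (auto simp: annulus_def)
  then show ?thesis
    using emeasure_annulus_gt[OF d, of "d/2"] d
    by (simp add: max_def min_def)
qed

lemma radial_measure:
  fixes d R :: real assumes d: "0 < d" "d < R"
  shows "distr (density (lborel :: (real^2) measure) (indicator (annulus d R))) borel norm
         = density lborel (\<lambda>r. ennreal (indicator {d..R} r * (2 * pi * r)))"
proof (rule measure_eqI_lessThan)
  fix x :: real
  have lhs: "emeasure (distr (density (lborel :: (real^2) measure) (indicator (annulus d R))) borel norm) {x<..}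
        = ennreal (pi * (R^2 - (min R (max d x))^2))"
  proof -
    have "emeasure (distr (density (lborel :: (real^2) measure) (indicator (annulus d R))) borel norm) {x<..}
        = emeasure (density (lborel :: (real^2) measure) (indicator (annulus d R))) (norm -` {x<..})"
      by (subst emeasure_distr) auto
    also have "\<dots> = emeasure lborel (annulus d R \<inter> {v. x < norm v})"
      by (subst emeasure_restricted) (auto simp: Int_commute vimage_def)
    finally show ?thesis using emeasure_annulus_gt[OF d] by simp
  qed
  show "emeasure (distr (density (lborel :: (real^2) measure) (indicator (annulus d R))) borel norm) {x<..} < \<infinity>"
    unfolding lhs by simp
  define lo where "lo = min R (max d x)"
  have lo: "d \<le> lo" "lo \<le> R" using d by (auto simp: lo_def)
  have "emeasure (density lborel (\<lambda>r. ennreal (indicator {d..R} r * (2 * pi * r)))) {x<..}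
      = (\<integral>\<^sup>+r. ennreal (indicator {d..R} r * (2 * pi * r)) * indicator {x<..} r \<partial>lborel)"
    by (rule emeasure_density) auto
  also have "\<dots> = (\<integral>\<^sup>+r. ennreal (indicator {lo..R} r * (2 * pi * r)) \<partial>lborel)"
  proof (rule nn_integral_cong_AE)
    show "AE r in lborel. ennreal (indicator {d..R} r * (2 * pi * r)) * indicator {x<..} r =
                       ennreal (indicator {lo..R} r * (2 * pi * r))"
      using AE_lborel_singleton[of lo]
    proof eventually_elim
      case (elim r)
      then show ?case using d
        by (auto simp: lo_def indicator_def max_def min_def split: if_splits)
    qed
  qed
  also have "\<dots> = ennreal (integral {lo..R} (\<lambda>r. 2 * pi * r))"
    by (rule nn_integral_cont_interval) (use lo d in \<open>auto intro!: continuous_intros\<close>)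
  also have "\<dots> = ennreal (pi * (R^2 - lo^2))" using lo by (simp add: integral_2pi_r)
  finally show "emeasure (distr (density (lborel :: (real^2) measure) (indicator (annulus d R))) borel norm) {x<..} =
      emeasure (density lborel (\<lambda>r. ennreal (indicator {d..R} r * (2 * pi * r)))) {x<..}"
    unfolding lhs lo_def by simp
qed auto

lemma radial_integral:
  fixes d R :: real and h :: "real \<Rightarrow> real"
  assumes d: "0 < d" "d < R" and c: "continuous_on {d..R} h" and nn: "\<And>r. r \<in> {d..R} \<Longrightarrow> 0 \<le> h r"
    and hm[measurable]: "h \<in> borel_measurable borel"
  shows "(\<integral>\<^sup>+v. ennreal (indicator (annulus d R) v * h (norm v)) \<partial>(lborel :: (real^2) measure))
       = ennreal (integral {d..R} (\<lambda>r. 2 * pi * r * h r))"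
proof -
  have "(\<integral>\<^sup>+v. ennreal (indicator (annulus d R) v * h (norm v)) \<partial>(lborel :: (real^2) measure))
      = (\<integral>\<^sup>+v. indicator (annulus d R) v * ennreal (max 0 (h (norm v))) \<partial>(lborel :: (real^2) measure))"
    using nn by (intro nn_integral_cong) (auto simp: indicator_def annulus_def max_def)
  also have "\<dots> = (\<integral>\<^sup>+v. ennreal (max 0 (h (norm v))) \<partial>density (lborel :: (real^2) measure) (indicator (annulus d R)))"
    by (subst nn_integral_density) auto
  also have "\<dots> = (\<integral>\<^sup>+r. ennreal (max 0 (h r)) \<partial>distr (density (lborel :: (real^2) measure) (indicator (annulus d R))) borel norm)"
    by (subst nn_integral_distr) auto
  also have "\<dots> = (\<integral>\<^sup>+r. ennreal (max 0 (h r)) \<partial>density lborel (\<lambda>r. ennreal (indicator {d..R} r * (2 * pi * r))))"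
    by (simp only: radial_measure[OF d])
  also have "\<dots> = (\<integral>\<^sup>+r. ennreal (indicator {d..R} r * (2 * pi * r * h r)) \<partial>lborel)"
    by (subst nn_integral_density) (use nn d in \<open>auto intro!: nn_integral_cong simp: indicator_def ennreal_mult[symmetric] max_def\<close>)
  also have "\<dots> = ennreal (integral {d..R} (\<lambda>r. 2 * pi * r * h r))"
    by (rule nn_integral_cont_interval) (use d nn in \<open>auto intro!: continuous_intros c\<close>)
  finally show ?thesis .
qed



definition markQ :: "real \<Rightarrow> real \<Rightarrow> real \<Rightarrow> ((real^2) \<times> real) measure" where
  "markQ r1 r2 phi = uniform_measure lborel (annulus r1 r2) \<Otimes>\<^sub>M gamma_measure phi 1"

definition pppS :: "real \<Rightarrow> real \<Rightarrow> real \<Rightarrow> nat \<Rightarrow> (nat \<Rightarrow> (real^2) \<times> real) \<Rightarrow> real" where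
  "pppS rho beta0 alpha n \<omega> = rho * (\<Sum>i<n. beta0 * norm (fst (\<omega> i)) powr (- alpha) * snd (\<omega> i))"

lemma pppS_measurable[measurable]:
  "pppS rho beta0 alpha n \<in> borel_measurable (PiM {..<n} (\<lambda>_. markQ r1 r2 phi))"
  unfolding pppS_def markQ_def by measurable

lemma ppp_unfold:
  "ppp_interference lam r1 r2 rho beta0 alpha phi =
     measure_pmf (poisson_pmf (lam * measure lborel (annulus r1 r2))) \<bind>
       (\<lambda>n. distr (PiM {..<n} (\<lambda>_. markQ r1 r2 phi)) borel (pppS rho beta0 alpha n))"
  unfolding ppp_interference_def markQ_def pppS_def ..

lemma prob_space_markQ:
  assumes d: "0 < d" "d < R" and phi: "0 < phi"
  shows "prob_space (markQ d R phi)"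
proof -
  interpret U: prob_space "uniform_measure lborel (annulus d R)"
    by (rule prob_space_uniform_measure) (use d in \<open>auto simp: emeasure_annulus\<close>)
  interpret K: prob_space "gamma_measure phi 1" by (rule prob_space_gamma_measure) (use phi in auto)
  interpret pair_prob_space "uniform_measure lborel (annulus d R)" "gamma_measure phi 1" ..
  show ?thesis unfolding markQ_def by (rule prob_space_axioms)
qed

lemma ppp_kernel_space:
  assumes d: "0 < d" "d < R" and phi: "0 < phi"
  shows "distr (PiM {..<n} (\<lambda>_. markQ d R phi)) borel (pppS rho beta0 alpha n) \<in> space (subprob_algebra borel)"
proof -
  interpret Q: prob_space "markQ d R phi" by (rule prob_space_markQ[OF d phi])
  interpret PP: prob_space "PiM {..<n} (\<lambda>_. markQ d R phi)" by (rule prob_space_PiM) (rule Q.prob_space_axioms)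
  have "prob_space (distr (PiM {..<n} (\<lambda>_. markQ d R phi)) borel (pppS rho beta0 alpha n))"
    by (rule PP.prob_space_distr) measurable
  then show ?thesis
    by (auto simp: space_subprob_algebra prob_space_imp_subprob_space)
qed

lemma ppp_kernel_measurable:
  assumes d: "0 < d" "d < R" and phi: "0 < phi"
  shows "(\<lambda>n. distr (PiM {..<n} (\<lambda>_. markQ d R phi)) borel (pppS rho beta0 alpha n))
          \<in> measurable (measure_pmf p) (subprob_algebra borel)"
  using ppp_kernel_space[OF d phi] by simp

lemma ppp_nonneg:
  assumes d: "0 < d" "d < R" and phi: "0 < phi" and rho: "0 \<le> rho" and beta0: "0 \<le> beta0"
  shows "AE x in ppp_interference lam d R rho beta0 alpha phi. 0 \<le> x"
  unfolding ppp_unfold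
proof (subst AE_bind[OF ppp_kernel_measurable[OF d phi]])
  show "Measurable.pred borel (\<lambda>x::real. 0 \<le> x)" by measurable
  show "AE n in measure_pmf (poisson_pmf (lam * measure lborel (annulus d R))).
          AE y in distr (PiM {..<n} (\<lambda>_. markQ d R phi)) borel (pppS rho beta0 alpha n). 0 \<le> y"
  proof (rule AE_I2)
    fix n :: nat
    interpret Q: prob_space "markQ d R phi" by (rule prob_space_markQ[OF d phi])
    interpret U: prob_space "uniform_measure lborel (annulus d R)"
      by (rule prob_space_uniform_measure) (use d in \<open>auto simp: emeasure_annulus\<close>)
    interpret K: prob_space "gamma_measure phi 1" by (rule prob_space_gamma_measure) (use phi in auto)
    interpret UK: pair_prob_space "uniform_measure lborel (annulus d R)" "gamma_measure phi 1" ..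
    have AQ: "AE q in markQ d R phi. 0 \<le> snd q"
      unfolding markQ_def
    proof (rule UK.AE_pair_measure)
      show "{x \<in> space (uniform_measure lborel (annulus d R) \<Otimes>\<^sub>M gamma_measure phi 1). 0 \<le> snd x}
            \<in> sets (uniform_measure lborel (annulus d R) \<Otimes>\<^sub>M gamma_measure phi 1)"
        by measurable
      show "AE x in uniform_measure lborel (annulus d R). AE y in gamma_measure phi 1. 0 \<le> snd (x, y)"
        by (rule AE_I2) (rule eventually_mono[OF AE_gamma_pos], simp)
    qed
    have "AE \<omega> in PiM {..<n} (\<lambda>_. markQ d R phi). \<forall>i\<in>{..<n}. 0 \<le> snd (\<omega> i)"
      by (intro eventually_ball_finite ballI AE_PiM_component[where P="\<lambda>q. 0 \<le> snd q"] AQ Q.prob_space_axioms) auto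
    then have "AE \<omega> in PiM {..<n} (\<lambda>_. markQ d R phi). 0 \<le> pppS rho beta0 alpha n \<omega>"
    proof eventually_elim
      case (elim \<omega>)
      then show ?case unfolding pppS_def using rho beta0
        by (intro mult_nonneg_nonneg sum_nonneg) auto
    qed
    then show "AE y in distr (PiM {..<n} (\<lambda>_. markQ d R phi)) borel (pppS rho beta0 alpha n). 0 \<le> y"
      by (subst AE_distr_iff) auto
  qed
qed



lemma hfun_cont:
  fixes c alpha phi d R :: real assumes c: "0 \<le> c" and d: "0 < d"
  shows "continuous_on {d..R} (\<lambda>r. (1 + c * r powr (- alpha)) powr (- phi))"
proof -
  have pos: "0 < 1 + c * r powr (- alpha)" for r using c
    by (metis add_pos_nonneg mult_nonneg_nonneg powr_ge_zero zero_less_one)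
  show ?thesis
    using d pos by (intro continuous_intros) (auto simp: less_imp_neq[symmetric] dest: order.strict_trans2)
qed

lemma ppp_kernel_laplace:
  assumes d: "0 < d" "d < R" and phi: "0 < phi"
  shows "(\<integral>\<^sup>+x. ennreal (exp (- u * x)) \<partial>distr (PiM {..<n} (\<lambda>_. markQ d R phi)) borel (pppS rho beta0 alpha n))
       = (\<integral>\<^sup>+q. ennreal (exp (- (u * rho * beta0 * norm (fst q) powr (- alpha)) * snd q)) \<partial>markQ d R phi) ^ n"
proof -
  interpret Q: prob_space "markQ d R phi" by (rule prob_space_markQ[OF d phi])
  interpret PS: product_sigma_finite "\<lambda>_::nat. markQ d R phi"
    unfolding product_sigma_finite_def using Q.sigma_finite_measure_axioms by blast
  have "(\<integral>\<^sup>+x. ennreal (exp (- u * x)) \<partial>distr (PiM {..<n} (\<lambda>_. markQ d R phi)) borel (pppS rho beta0 alpha n))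
      = (\<integral>\<^sup>+\<omega>. ennreal (exp (- u * pppS rho beta0 alpha n \<omega>)) \<partial>PiM {..<n} (\<lambda>_. markQ d R phi))"
    by (subst nn_integral_distr) auto
  also have "\<dots> = (\<integral>\<^sup>+\<omega>. (\<Prod>i\<in>{..<n}. (\<lambda>i q. ennreal (exp (- (u * rho * beta0 * norm (fst q) powr (- alpha)) * snd q))) i (\<omega> i)) \<partial>PiM {..<n} (\<lambda>_. markQ d R phi))"
  proof (intro nn_integral_cong)
    fix \<omega> :: "nat \<Rightarrow> (real^2) \<times> real"
    have "- u * pppS rho beta0 alpha n \<omega> = (\<Sum>i<n. - (u * rho * beta0 * norm (fst (\<omega> i)) powr (- alpha)) * snd (\<omega> i))"
      unfolding pppS_def by (simp add: sum_distrib_left sum_negf mult.assoc)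
    then show "ennreal (exp (- u * pppS rho beta0 alpha n \<omega>)) = (\<Prod>i\<in>{..<n}. (\<lambda>i q. ennreal (exp (- (u * rho * beta0 * norm (fst q) powr (- alpha)) * snd q))) i (\<omega> i))"
      by (simp add: exp_sum prod_ennreal)
  qed
  also have "\<dots> = (\<Prod>i\<in>{..<n}. integral\<^sup>N (markQ d R phi) (\<lambda>q. ennreal (exp (- (u * rho * beta0 * norm (fst q) powr (- alpha)) * snd q))))"
    by (rule PS.product_nn_integral_prod) (auto simp: markQ_def)
  also have "\<dots> = (\<integral>\<^sup>+q. ennreal (exp (- (u * rho * beta0 * norm (fst q) powr (- alpha)) * snd q)) \<partial>markQ d R phi) ^ n"
    by simp
  finally show ?thesis .
qed

lemma markQ_laplace:
  assumes d: "0 < d" "d < R" and phi: "0 < phi" and c: "0 \<le> c"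
  shows "(\<integral>\<^sup>+q. ennreal (exp (- (c * norm (fst q) powr (- alpha)) * snd q)) \<partial>markQ d R phi)
       = ennreal (integral {d..R} (\<lambda>r. 2 * pi * r * (1 + c * r powr (- alpha)) powr (- phi)) / (pi * (R^2 - d^2)))"
proof -
  interpret U: prob_space "uniform_measure lborel (annulus d R)"
    by (rule prob_space_uniform_measure) (use d in \<open>auto simp: emeasure_annulus\<close>)
  interpret K: prob_space "gamma_measure phi 1" by (rule prob_space_gamma_measure) (use phi in auto)
  define h where "h r = (1 + c * r powr (- alpha)) powr (- phi)" for r
  have hc: "continuous_on {d..R} h" unfolding h_def by (rule hfun_cont[OF c d(1)])
  have hm[measurable]: "h \<in> borel_measurable borel" unfolding h_def by measurable
  have hnn: "0 \<le> h r" for r by (simp add: h_def)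
  have "(\<integral>\<^sup>+q. ennreal (exp (- (c * norm (fst q) powr (- alpha)) * snd q)) \<partial>markQ d R phi)
      = (\<integral>\<^sup>+x. \<integral>\<^sup>+y. ennreal (exp (- (c * norm (fst (x, y)) powr (- alpha)) * snd (x, y))) \<partial>gamma_measure phi 1 \<partial>uniform_measure lborel (annulus d R))"
    unfolding markQ_def by (rule K.nn_integral_fst[symmetric]) measurable
  also have "\<dots> = (\<integral>\<^sup>+x. ennreal (h (norm x)) \<partial>uniform_measure lborel (annulus d R))"
  proof (intro nn_integral_cong)
    fix x :: "real^2"
    have "0 \<le> c * norm x powr (- alpha)" using c by simp
    then show "(\<integral>\<^sup>+y. ennreal (exp (- (c * norm (fst (x, y)) powr (- alpha)) * snd (x, y))) \<partial>gamma_measure phi 1) = ennreal (h (norm x))"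
      using gamma_laplace_nn[OF phi, of 1 "c * norm x powr (- alpha)"] by (simp add: h_def)
  qed
  also have "\<dots> = (\<integral>\<^sup>+x. ennreal (h (norm x)) * indicator (annulus d R) x \<partial>lborel) / emeasure lborel (annulus d R)"
    by (rule nn_integral_uniform_measure) auto
  also have "(\<integral>\<^sup>+x. ennreal (h (norm x)) * indicator (annulus d R) x \<partial>lborel)
        = (\<integral>\<^sup>+v. ennreal (indicator (annulus d R) v * h (norm v)) \<partial>(lborel :: (real^2) measure))"
    by (intro nn_integral_cong) (simp add: indicator_def)
  also have "\<dots> = ennreal (integral {d..R} (\<lambda>r. 2 * pi * r * h r))"
    by (rule radial_integral[OF d hc]) (auto simp: hnn)
  also have "emeasure lborel (annulus d R) = ennreal (pi * (R^2 - d^2))" by (rule emeasure_annulus[OF d])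
  also have "ennreal (integral {d..R} (\<lambda>r. 2 * pi * r * h r)) / ennreal (pi * (R^2 - d^2))
        = ennreal (integral {d..R} (\<lambda>r. 2 * pi * r * h r) / (pi * (R^2 - d^2)))"
  proof (rule divide_ennreal)
    show "0 \<le> integral {d..R} (\<lambda>r. 2 * pi * r * h r)"
      by (rule integral_nonneg) (use d hnn in \<open>auto intro!: integrable_continuous_interval continuous_intros hc\<close>)
    have "d^2 < R^2" using d by (simp add: power_strict_mono)
    then show "0 < pi * (R^2 - d^2)" by simp
  qed
  finally show ?thesis unfolding h_def .
qed



lemma ppp_laplace:
  fixes d R lam rho beta0 alpha phi u :: real
  assumes d: "0 < d" "d < R" and phi: "0 < phi" and lam: "0 < lam" and rho: "0 \<le> rho"
    and beta0: "0 \<le> beta0" and u: "0 \<le> u"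
  shows "(\<integral>\<^sup>+x. ennreal (exp (- u * x)) \<partial>ppp_interference lam d R rho beta0 alpha phi)
       = ennreal (exp (2 * pi * lam * integral {d..R} (\<lambda>r. ((1 + u * rho * beta0 * r powr (- alpha)) powr (- phi) - 1) * r)))"
proof -
  define h where "h r = (1 + u * rho * beta0 * r powr (- alpha)) powr (- phi)" for r
  define m where "m = pi * (R^2 - d^2)"
  define I where "I = integral {d..R} (\<lambda>r. 2 * pi * r * h r)"
  define q where "q = I / m"
  define mu where "mu = lam * m"
  have c: "0 \<le> u * rho * beta0" using u rho beta0 by simp
  have hc: "continuous_on {d..R} h" unfolding h_def by (rule hfun_cont[OF _ d(1)]) (use c in simp)
  have "d^2 < R^2" using d by (simp add: power_strict_mono)
  then have m: "0 < m" unfolding m_def by simp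
  have I0: "0 \<le> I" unfolding I_def
  proof (rule integral_nonneg)
    show "(\<lambda>r. 2 * pi * r * h r) integrable_on {d..R}"
      by (intro integrable_continuous_interval continuous_intros hc)
    show "0 \<le> 2 * pi * x * h x" if "x \<in> {d..R}" for x
      using that d by (simp add: h_def)
  qed
  have q0: "0 \<le> q" unfolding q_def using I0 m by simp
  have mu: "0 < mu" unfolding mu_def using lam m by simp
  have rate: "lam * measure lborel (annulus d R) = mu"
    unfolding mu_def m_def by (simp add: measure_annulus[OF d])
  have "(\<integral>\<^sup>+x. ennreal (exp (- u * x)) \<partial>ppp_interference lam d R rho beta0 alpha phi)
     = (\<integral>\<^sup>+n. \<integral>\<^sup>+x. ennreal (exp (- u * x)) \<partial>distr (PiM {..<n} (\<lambda>_. markQ d R phi)) borel (pppS rho beta0 alpha n)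
           \<partial>measure_pmf (poisson_pmf mu))"
    unfolding ppp_unfold rate
    by (rule nn_integral_bind[OF _ ppp_kernel_measurable[OF d phi]]) measurable
  also have "\<dots> = (\<integral>\<^sup>+n. ennreal q ^ n \<partial>measure_pmf (poisson_pmf mu))"
  proof (intro nn_integral_cong)
    fix n :: nat
    show "(\<integral>\<^sup>+x. ennreal (exp (- u * x)) \<partial>distr (PiM {..<n} (\<lambda>_. markQ d R phi)) borel (pppS rho beta0 alpha n)) = ennreal q ^ n"
      unfolding ppp_kernel_laplace[OF d phi] markQ_laplace[OF d phi c]
      by (simp add: q_def I_def m_def h_def)
  qed
  also have "\<dots> = (\<Sum>n. ennreal (exp (- mu) * ((mu * q) ^ n / fact n)))"
    unfolding nn_integral_measure_pmf nn_integral_count_space_nat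
  proof (intro suminf_cong)
    fix n :: nat
    have "ennreal (pmf (poisson_pmf mu) n) * ennreal q ^ n = ennreal (mu ^ n / fact n * exp (- mu)) * ennreal (q ^ n)"
      by (simp only: pmf_poisson[OF mu] ennreal_power[OF q0])
    also have "\<dots> = ennreal (mu ^ n / fact n * exp (- mu) * q ^ n)"
      by (rule ennreal_mult[symmetric]) (use mu q0 in auto)
    also have "mu ^ n / fact n * exp (- mu) * q ^ n = exp (- mu) * ((mu * q) ^ n / fact n)"
      by (simp add: power_mult_distrib)
    finally show "ennreal (pmf (poisson_pmf mu) n) * ennreal q ^ n = ennreal (exp (- mu) * ((mu * q) ^ n / fact n))" .
  qed
  also have "\<dots> = ennreal (exp (- mu) * exp (mu * q))"
  proof -
    have s: "(\<lambda>n. (mu * q) ^ n / fact n) sums exp (mu * q)"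
      using exp_converges[of "mu * q"] by (simp add: divide_inverse_commute scaleR_conv_of_real)
    then have s2: "(\<lambda>n. exp (- mu) * ((mu * q) ^ n / fact n)) sums (exp (- mu) * exp (mu * q))"
      by (rule sums_mult)
    show ?thesis
    proof -
      have "(\<Sum>n. ennreal (exp (- mu) * ((mu * q) ^ n / fact n))) = ennreal (\<Sum>n. exp (- mu) * ((mu * q) ^ n / fact n))"
        by (rule suminf_ennreal2) (use s2 mu q0 in \<open>auto simp: sums_iff\<close>)
      also have "(\<Sum>n. exp (- mu) * ((mu * q) ^ n / fact n)) = exp (- mu) * exp (mu * q)"
        using s2 by (rule sums_unique[symmetric])
      finally show ?thesis .
    qed
  qed
  also have "exp (- mu) * exp (mu * q) = exp (lam * (I - m))"
  proof -
    have "- mu + mu * q = lam * (I - m)" unfolding mu_def q_def using m by (simp add: field_simps)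
    then show ?thesis by (simp add: exp_add[symmetric])
  qed
  also have "I - m = 2 * pi * integral {d..R} (\<lambda>r. (h r - 1) * r)"
  proof -
    have i1: "(\<lambda>r. 2 * pi * r * h r) integrable_on {d..R}"
      by (intro integrable_continuous_interval continuous_intros hc)
    have i2: "(\<lambda>r. 2 * pi * r) integrable_on {d..R}"
      by (intro integrable_continuous_interval continuous_intros)
    have "I - m = integral {d..R} (\<lambda>r. 2 * pi * r * h r) - integral {d..R} (\<lambda>r. 2 * pi * r)"
      unfolding I_def m_def using d by (simp add: integral_2pi_r)
    also have "\<dots> = integral {d..R} (\<lambda>r. 2 * pi * r * h r - 2 * pi * r)"
      by (rule integral_diff[OF i1 i2, symmetric])
    also have "(\<lambda>r. 2 * pi * r * h r - 2 * pi * r) = (\<lambda>r. (2 * pi) * ((h r - 1) * r))"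
      by (auto simp: algebra_simps)
    also have "integral {d..R} (\<lambda>r. (2 * pi) * ((h r - 1) * r)) = 2 * pi * integral {d..R} (\<lambda>r. (h r - 1) * r)"
      by (rule integral_mult_right)
    finally show ?thesis .
  qed
  finally have "(\<integral>\<^sup>+x. ennreal (exp (- u * x)) \<partial>ppp_interference lam d R rho beta0 alpha phi)
     = ennreal (exp (lam * (2 * pi * integral {d..R} (\<lambda>r. (h r - 1) * r))))" .
  moreover have "lam * (2 * pi * integral {d..R} (\<lambda>r. (h r - 1) * r)) = 2 * pi * lam * integral {d..R} (\<lambda>r. (h r - 1) * r)"
    by (simp only: mult_ac)
  ultimately show ?thesis by (simp only: h_def)
qed



theorem lemma8:
  fixes M :: "'w measure"
    and S0 IB0 IB :: "'w \<Rightarrow> real"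
    and T thetaS0 Ie rhoB beta0 alpha1 lamB phiB d00 areaA :: real
    and kS0 :: nat
  assumes "prob_space M"
    and "T > 0" and "thetaS0 > 0" and "kS0 > 0" and "Ie \<ge> 0"
    and "rhoB > 0" and "beta0 > 0" and "alpha1 > 0" and "lamB > 0" and "phiB > 1"
    and "areaA > 0" and "0 < d00" and "d00 < sqrt (areaA / pi)"
    and "distr M borel S0 = gamma_measure (real kS0) thetaS0"
    and "distr M borel IB0 = gamma_measure (phiB - 1) (rhoB * beta0 * d00 powr (- alpha1))"
    and "distr M borel IB = ppp_interference lamB d00 (sqrt (areaA / pi)) rhoB beta0 alpha1 phiB"
    and "prob_space.indep_vars M (\<lambda>_. borel)
           (\<lambda>i::nat. if i = 0 then S0 else if i = 1 then IB0 else IB) {0, 1, 2}"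
  shows "measure M {\<omega> \<in> space M. S0 \<omega> > T * (IB0 \<omega> + IB \<omega> + Ie)} =
    (let LIB0 = (\<lambda>s::real. (1 + s * T * rhoB * beta0 * d00 powr (- alpha1) / thetaS0) powr (1 - phiB));
         LIB = (\<lambda>s::real. exp (2 * pi * lamB *
                  integral {d00..sqrt (areaA / pi)}
                    (\<lambda>r. ((1 + s * T * rhoB * beta0 * r powr (- alpha1) / thetaS0) powr (- phiB) - 1) * r)));
         F = (\<lambda>s::real. exp (- s * T * Ie / thetaS0) * LIB0 s * LIB s)
     in (\<Sum>i<kS0. (-1) ^ i / fact i * (deriv ^^ i) F 1))"
proof -
  note Mps = assms(1)
  interpret prob_space M by (rule Mps)
  have T: "0 < T" and th: "0 < thetaS0" and k: "0 < kS0" and Ie: "0 \<le> Ie" and rho: "0 < rhoB"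
    and beta: "0 < beta0" and lam: "0 < lamB" and phi: "1 < phiB" and d: "0 < d00" "d00 < sqrt (areaA / pi)"
    using assms by auto
  define R where "R = sqrt (areaA / pi)"
  have dR: "0 < d00" "d00 < R" using d by (auto simp: R_def)
  define X where "X = (\<lambda>i::nat. if i = 0 then S0 else if i = 1 then IB0 else IB)"
  have ind: "indep_vars (\<lambda>_. borel) X {0, 1, 2}" using assms(17) unfolding X_def .
  have rvX: "\<And>i. i \<in> {0,1,2} \<Longrightarrow> X i \<in> borel_measurable M"
    using ind unfolding indep_vars_def by auto
  have S0m[measurable]: "S0 \<in> borel_measurable M" using rvX[of 0] by (simp add: X_def)
  have IB0m[measurable]: "IB0 \<in> borel_measurable M" using rvX[of 1] by (simp add: X_def)
  have IBm[measurable]: "IB \<in> borel_measurable M" using rvX[of 2] by (simp add: X_def)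
  define b0 where "b0 = rhoB * beta0 * d00 powr (- alpha1)"
  have b0: "0 < b0" unfolding b0_def using rho beta d by simp
  define Y where "Y \<omega> = T * (IB0 \<omega> + IB \<omega> + Ie) / thetaS0" for \<omega>
  have Ym[measurable]: "Y \<in> borel_measurable M" unfolding Y_def by measurable
  have AE0: "AE \<omega> in M. 0 \<le> IB0 \<omega>"
  proof (rule AE_distrD[of IB0 M borel "\<lambda>x. 0 \<le> x"])
    show "IB0 \<in> measurable M borel" by simp
    show "AE x in distr M borel IB0. 0 \<le> x"
      unfolding assms(15) by (rule eventually_mono[OF AE_gamma_pos]) simp
  qed
  have AE1: "AE \<omega> in M. 0 \<le> IB \<omega>"
  proof (rule AE_distrD[of IB M borel "\<lambda>x. 0 \<le> x"])
    show "IB \<in> measurable M borel" by simp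
    show "AE x in distr M borel IB. 0 \<le> x"
      unfolding assms(16) by (rule ppp_nonneg) (use d phi rho beta in auto)
  qed
  have AEY: "AE \<omega> in M. 0 \<le> Y \<omega>"
    using AE0 AE1 by eventually_elim (use T th Ie in \<open>auto simp: Y_def\<close>)
  have LHS: "measure M {\<omega> \<in> space M. S0 \<omega> > T * (IB0 \<omega> + IB \<omega> + Ie)}
      = (\<Sum>n<kS0. (\<integral>\<omega>. Y \<omega> ^ n * exp (- 1 * Y \<omega>) \<partial>M) / fact n)"
  proof -
    define Z where "Z \<omega> = IB0 \<omega> + IB \<omega>" for \<omega>
    have Zm[measurable]: "Z \<in> borel_measurable M" unfolding Z_def by measurable
    have AEZ: "AE \<omega> in M. 0 \<le> Z \<omega>" using AE0 AE1 by eventually_elim (auto simp: Z_def)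
    have iv0: "indep_var (PiM {1,2} (\<lambda>_. borel)) (\<lambda>\<omega>. restrict (\<lambda>i. X i \<omega>) {1,2})
                         (PiM {0} (\<lambda>_. borel)) (\<lambda>\<omega>. restrict (\<lambda>i. X i \<omega>) {0})"
      by (rule indep_var_restrict[OF ind]) auto
    have m1: "(\<lambda>r::nat \<Rightarrow> real. r 1 + r 2) \<in> measurable (PiM {1,2} (\<lambda>_. borel)) borel" by measurable
    have m2: "(\<lambda>r::nat \<Rightarrow> real. r 0) \<in> measurable (PiM {0} (\<lambda>_. borel)) borel" by measurable
    have iv1: "indep_var borel ((\<lambda>r::nat \<Rightarrow> real. r 1 + r 2) \<circ> (\<lambda>\<omega>. restrict (\<lambda>i. X i \<omega>) {1,2}))
                         borel ((\<lambda>r::nat \<Rightarrow> real. r 0) \<circ> (\<lambda>\<omega>. restrict (\<lambda>i. X i \<omega>) {0}))"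
      by (rule indep_var_compose[OF iv0 m1 m2])
    have c1: "((\<lambda>r::nat \<Rightarrow> real. r 1 + r 2) \<circ> (\<lambda>\<omega>. restrict (\<lambda>i. X i \<omega>) {1,2})) = Z"
      by (auto simp: X_def Z_def fun_eq_iff)
    have c2: "((\<lambda>r::nat \<Rightarrow> real. r 0) \<circ> (\<lambda>\<omega>. restrict (\<lambda>i. X i \<omega>) {0})) = S0"
      by (auto simp: X_def fun_eq_iff)
    have iv: "indep_var borel Z borel S0" using iv1 unfolding c1 c2 .
    have jd: "distr M borel Z \<Otimes>\<^sub>M distr M borel S0 = distr M (borel \<Otimes>\<^sub>M borel) (\<lambda>\<omega>. (Z \<omega>, S0 \<omega>))"
      using iv indep_var_distribution_eq by blast
    interpret PZ: prob_space "distr M borel Z" by (rule prob_space_distr) simp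
    interpret P0: prob_space "distr M borel S0" by (rule prob_space_distr) simp
    interpret PP: pair_prob_space "distr M borel Z" "distr M borel S0" ..
    define Xs where "Xs = {p \<in> space (borel \<Otimes>\<^sub>M borel). T * (fst p + Ie) < (snd p :: real)}"
    have Xs[measurable]: "Xs \<in> sets (borel \<Otimes>\<^sub>M borel)" unfolding Xs_def by measurable
    define g where "g z = (\<Sum>n<kS0. (T * (z + Ie) / thetaS0) ^ n * exp (- (T * (z + Ie)) / thetaS0) / fact n)" for z
    have gm[measurable]: "g \<in> borel_measurable borel" unfolding g_def by measurable
    have "emeasure M {\<omega> \<in> space M. S0 \<omega> > T * (IB0 \<omega> + IB \<omega> + Ie)}
        = emeasure (distr M (borel \<Otimes>\<^sub>M borel) (\<lambda>\<omega>. (Z \<omega>, S0 \<omega>))) Xs"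
      by (subst emeasure_distr[OF _ Xs], measurable)
         (auto intro!: arg_cong[where f="emeasure M"] simp: Xs_def Z_def space_pair_measure)
    also have "\<dots> = emeasure (distr M borel Z \<Otimes>\<^sub>M distr M borel S0) Xs" by (simp only: jd)
    also have "\<dots> = (\<integral>\<^sup>+z. emeasure (distr M borel S0) (Pair z -` Xs) \<partial>distr M borel Z)"
      by (rule P0.emeasure_pair_measure_alt) simp
    also have "\<dots> = (\<integral>\<^sup>+z. ennreal (g z) \<partial>distr M borel Z)"
    proof (rule nn_integral_cong_AE)
      have "AE z in distr M borel Z. 0 \<le> z"
        by (subst AE_distr_iff) (auto simp: AEZ)
      then show "AE z in distr M borel Z. emeasure (distr M borel S0) (Pair z -` Xs) = ennreal (g z)"
      proof eventually_elim
        case (elim z)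
        have "Pair z -` Xs = {T * (z + Ie)<..}" by (auto simp: Xs_def space_pair_measure)
        moreover have "0 \<le> T * (z + Ie)" using elim T Ie by simp
        ultimately show ?case
          unfolding assms(14) g_def using gamma_tail[OF k th] by simp
      qed
    qed
    also have "\<dots> = (\<integral>\<^sup>+\<omega>. ennreal (g (Z \<omega>)) \<partial>M)"
      by (rule nn_integral_distr) auto
    also have "\<dots> = (\<integral>\<^sup>+\<omega>. ennreal (\<Sum>n<kS0. Y \<omega> ^ n * exp (- 1 * Y \<omega>) / fact n) \<partial>M)"
    proof (intro nn_integral_cong arg_cong[where f=ennreal])
      fix \<omega>
      have e1: "T * (Z \<omega> + Ie) / thetaS0 = Y \<omega>" by (simp add: Y_def Z_def)
      have e2: "- (T * (Z \<omega> + Ie)) / thetaS0 = - 1 * Y \<omega>" by (simp add: Y_def Z_def)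
      show "g (Z \<omega>) = (\<Sum>n<kS0. Y \<omega> ^ n * exp (- 1 * Y \<omega>) / fact n)"
        unfolding g_def e1 e2 ..
    qed
    also have "\<dots> = ennreal (\<integral>\<omega>. (\<Sum>n<kS0. Y \<omega> ^ n * exp (- 1 * Y \<omega>) / fact n) \<partial>M)"
    proof (rule nn_integral_eq_integral)
      show "integrable M (\<lambda>\<omega>. \<Sum>n<kS0. Y \<omega> ^ n * exp (- 1 * Y \<omega>) / fact n)"
        by (intro Bochner_Integration.integrable_sum integrable_divide_zero integrable_pow_exp[OF Mps Ym AEY]) simp
      show "AE \<omega> in M. 0 \<le> (\<Sum>n<kS0. Y \<omega> ^ n * exp (- 1 * Y \<omega>) / fact n)"
        using AEY by eventually_elim (auto intro!: sum_nonneg)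
    qed
    also have "(\<integral>\<omega>. (\<Sum>n<kS0. Y \<omega> ^ n * exp (- 1 * Y \<omega>) / fact n) \<partial>M)
        = (\<Sum>n<kS0. (\<integral>\<omega>. Y \<omega> ^ n * exp (- 1 * Y \<omega>) \<partial>M) / fact n)"
      by (subst Bochner_Integration.integral_sum)
         (intro integrable_divide_zero integrable_pow_exp[OF Mps Ym AEY], simp, simp)
    finally have E: "emeasure M {\<omega> \<in> space M. S0 \<omega> > T * (IB0 \<omega> + IB \<omega> + Ie)}
        = ennreal (\<Sum>n<kS0. (\<integral>\<omega>. Y \<omega> ^ n * exp (- 1 * Y \<omega>) \<partial>M) / fact n)" .
    have nn: "0 \<le> (\<Sum>n<kS0. (\<integral>\<omega>. Y \<omega> ^ n * exp (- 1 * Y \<omega>) \<partial>M) / fact n)"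
      by (intro sum_nonneg divide_nonneg_nonneg integral_nonneg_AE)
         (use AEY in \<open>auto elim!: eventually_mono\<close>)
    show ?thesis unfolding measure_def E using nn by simp
  qed
  define G where "G t = (\<integral>\<omega>. exp (- t * Y \<omega>) \<partial>M)" for t
  define LIB0 where "LIB0 = (\<lambda>s::real. (1 + s * T * rhoB * beta0 * d00 powr (- alpha1) / thetaS0) powr (1 - phiB))"
  define LIB where "LIB = (\<lambda>s::real. exp (2 * pi * lamB *
                  integral {d00..sqrt (areaA / pi)}
                    (\<lambda>r. ((1 + s * T * rhoB * beta0 * r powr (- alpha1) / thetaS0) powr (- phiB) - 1) * r)))"
  define F where "F = (\<lambda>s::real. exp (- s * T * Ie / thetaS0) * LIB0 s * LIB s)"
  have FG: "F t = G t" if t: "t \<in> {0<..}" for t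
  proof -
    have t0: "0 < t" using t by simp
    define u where "u = t * T / thetaS0"
    have u: "0 \<le> u" unfolding u_def using t0 T th by simp
    define Ec where "Ec = exp (- t * T * Ie / thetaS0)"
    have e1: "exp (- t * Y \<omega>) = Ec * (exp (- u * IB0 \<omega>) * exp (- u * IB \<omega>))" for \<omega>
    proof -
      have "- t * Y \<omega> = - t * T * Ie / thetaS0 + (- u * IB0 \<omega> + - u * IB \<omega>)"
        unfolding Y_def u_def using th by (simp add: field_simps)
      then have "exp (- t * Y \<omega>) = exp (- t * T * Ie / thetaS0 + (- u * IB0 \<omega> + - u * IB \<omega>))"
        by (simp only:)
      also have "\<dots> = Ec * (exp (- u * IB0 \<omega>) * exp (- u * IB \<omega>))"
        unfolding Ec_def by (simp only: exp_add)
      finally show ?thesis .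
    qed
    have int_exp: "integrable M (\<lambda>\<omega>. exp (- t * Y \<omega>))"
      using integrable_pow_exp[OF Mps Ym AEY t0, of 0] by simp
    define X' where "X' i \<omega> = ennreal (exp (- u * X i \<omega>))" for i \<omega>
    have sub: "indep_vars (\<lambda>_. borel) X {1, 2}" by (rule indep_vars_subset[OF ind]) auto
    have "indep_vars (\<lambda>_. borel) (\<lambda>i x. (\<lambda>_ x. ennreal (exp (- u * x))) i (X i x)) {1, 2}"
      by (rule indep_vars_compose2[OF sub]) auto
    then have indX': "indep_vars (\<lambda>_. borel) X' {1, 2}"
      unfolding X'_def by simp
    have prodI: "(\<integral>\<^sup>+\<omega>. ennreal (exp (- u * IB0 \<omega>) * exp (- u * IB \<omega>)) \<partial>M)
        = (\<integral>\<^sup>+\<omega>. ennreal (exp (- u * IB0 \<omega>)) \<partial>M) * (\<integral>\<^sup>+\<omega>. ennreal (exp (- u * IB \<omega>)) \<partial>M)"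
    proof -
      have "(\<integral>\<^sup>+\<omega>. (\<Prod>i\<in>{1,2}. X' i \<omega>) \<partial>M) = (\<Prod>i\<in>{1,2}. \<integral>\<^sup>+\<omega>. X' i \<omega> \<partial>M)"
        by (rule indep_vars_nn_integral[OF _ indX']) (auto simp: X'_def)
      then show ?thesis by (simp add: X'_def X_def ennreal_mult)
    qed
    have L0: "(\<integral>\<^sup>+\<omega>. ennreal (exp (- u * IB0 \<omega>)) \<partial>M) = ennreal ((1 + u * b0) powr (- (phiB - 1)))"
    proof -
      have "(\<integral>\<^sup>+\<omega>. ennreal (exp (- u * IB0 \<omega>)) \<partial>M) = (\<integral>\<^sup>+x. ennreal (exp (- u * x)) \<partial>distr M borel IB0)"
        by (rule nn_integral_distr[symmetric]) auto
      also have "\<dots> = ennreal ((1 + u * b0) powr (- (phiB - 1)))"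
        unfolding assms(15) b0_def[symmetric]
      proof (rule gamma_laplace_nn)
        have "0 < 1 / b0" using b0 by simp
        then show "0 < 1 / b0 + u" using u by linarith
      qed (use phi b0 in auto)
      finally show ?thesis .
    qed
    have L1: "(\<integral>\<^sup>+\<omega>. ennreal (exp (- u * IB \<omega>)) \<partial>M)
        = ennreal (exp (2 * pi * lamB * integral {d00..R} (\<lambda>r. ((1 + u * rhoB * beta0 * r powr (- alpha1)) powr (- phiB) - 1) * r)))"
    proof -
      have "(\<integral>\<^sup>+\<omega>. ennreal (exp (- u * IB \<omega>)) \<partial>M) = (\<integral>\<^sup>+x. ennreal (exp (- u * x)) \<partial>distr M borel IB)"
        by (rule nn_integral_distr[symmetric]) auto
      also have "\<dots> = ennreal (exp (2 * pi * lamB * integral {d00..R} (\<lambda>r. ((1 + u * rhoB * beta0 * r powr (- alpha1)) powr (- phiB) - 1) * r)))"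
        unfolding assms(16) R_def[symmetric]
        by (rule ppp_laplace) (use dR phi lam rho beta u in auto)
      finally show ?thesis .
    qed
    define A0 where "A0 = (1 + u * b0) powr (- (phiB - 1))"
    define A1 where "A1 = exp (2 * pi * lamB * integral {d00..R} (\<lambda>r. ((1 + u * rhoB * beta0 * r powr (- alpha1)) powr (- phiB) - 1) * r))"
    have "ennreal (G t) = (\<integral>\<^sup>+\<omega>. ennreal (exp (- t * Y \<omega>)) \<partial>M)"
      unfolding G_def
      using nn_integral_eq_integral[OF int_exp] by simp
    also have "\<dots> = (\<integral>\<^sup>+\<omega>. ennreal Ec * ennreal (exp (- u * IB0 \<omega>) * exp (- u * IB \<omega>)) \<partial>M)"
      by (intro nn_integral_cong, simp only: e1, rule ennreal_mult) (auto simp: Ec_def)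
    also have "\<dots> = ennreal Ec * (\<integral>\<^sup>+\<omega>. ennreal (exp (- u * IB0 \<omega>) * exp (- u * IB \<omega>)) \<partial>M)"
      by (rule nn_integral_cmult) simp
    also have "\<dots> = ennreal (Ec * A0 * A1)"
      unfolding prodI L0 L1 A0_def A1_def by (simp add: Ec_def ennreal_mult mult.assoc)
    finally have GE: "ennreal (G t) = ennreal (Ec * A0 * A1)" .
    have G0: "0 \<le> G t" unfolding G_def by (rule Bochner_Integration.integral_nonneg) simp
    have "G t = Ec * A0 * A1"
      using GE G0 by (simp add: Ec_def A0_def A1_def)
    moreover have "LIB0 t = A0"
    proof -
      have "t * T * rhoB * beta0 * d00 powr (- alpha1) / thetaS0 = u * b0"
        unfolding u_def b0_def by simp
      then show ?thesis unfolding LIB0_def A0_def by simp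
    qed
    moreover have "LIB t = A1"
    proof -
      have "(\<lambda>r. ((1 + t * T * rhoB * beta0 * r powr (- alpha1) / thetaS0) powr (- phiB) - 1) * r)
          = (\<lambda>r. ((1 + u * rhoB * beta0 * r powr (- alpha1)) powr (- phiB) - 1) * r)"
        unfolding u_def by simp
      then show ?thesis unfolding LIB_def A1_def R_def by simp
    qed
    ultimately show ?thesis unfolding F_def Ec_def by simp
  qed
  have D: "(deriv ^^ i) F 1 = (-1) ^ i * (\<integral>\<omega>. Y \<omega> ^ i * exp (- 1 * Y \<omega>) \<partial>M)" for i
  proof -
    have "(deriv ^^ i) F 1 = (deriv ^^ i) G 1"
      by (rule deriv_funpow_local[where S="{0<..}"]) (use FG in auto)
    also have "\<dots> = (-1) ^ i * (\<integral>\<omega>. Y \<omega> ^ i * exp (- 1 * Y \<omega>) \<partial>M)"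
      unfolding G_def by (rule deriv_iter_laplace[OF Mps Ym AEY]) simp
    finally show ?thesis .
  qed
  have RHS: "(\<Sum>i<kS0. (-1) ^ i / fact i * (deriv ^^ i) F 1) = (\<Sum>n<kS0. (\<integral>\<omega>. Y \<omega> ^ n * exp (- 1 * Y \<omega>) \<partial>M) / fact n)"
  proof (rule sum.cong)
    fix i assume "i \<in> {..<kS0}"
    have "(-1::real) ^ i * (-1) ^ i = 1" by (simp add: power_mult_distrib[symmetric])
    then show "(-1) ^ i / fact i * (deriv ^^ i) F 1 = (\<integral>\<omega>. Y \<omega> ^ i * exp (- 1 * Y \<omega>) \<partial>M) / fact i"
      unfolding D by (simp add: field_simps)
  qed simp
  show ?thesis
    unfolding Let_def LHS RHS[symmetric] F_def LIB0_def LIB_def ..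
qed

end
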